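(* Let $f$ be a homeomorphism of a compact metric space $(X,d)$ with the shadowing property such that for every $\epsilon>0$ there is $\delta>0$ with: $d(x,y)<\delta$ implies $V^s_\epsilon(x)\cap V^u_\epsilon(y)\ne\emptyset$. Then $f$ has the limit shadowing property.
   Context: Shadowing: for every $\varepsilon>0$ there is $\delta>0$ such that for every sequence $(x_k)_{k\in\mathbb{Z}}$ with $d(f(x_k),x_{k+1})<\delta$ for all $k$ there is $y$ with $d(f^k(y),x_k)<\varepsilon$ for all $k\in\mathbb{Z}$. $W^s_\epsilon(x)=\{y: d(f^n(x),f^n(y))\le\epsilon\ \forall n\ge0\}$, $W^u_\epsilon(x)=\{y: d(f^{-n}(x),f^{-n}(y))\le\epsilon\ \forall n\ge0\}$, $W^s(x)=\{y: d(f^n(x),f^n(y))\to0\ (n\to+\infty)\}$, $W^u(x)=\{y: d(f^{-n}(x),f^{-n}(y))\to0\ (n\to+\infty)\}$, $V^s_\epsilon(x)=W^s(x)\cap W^s_\epsilon(x)$, $V^u_\epsilon(x)=W^u(x)\cap W^u_\epsilon(x)$. $f$ has the limit shadowing property if for every sequence $(x_k)_{k\in\mathbb{N}}$ with $d(f(x_k),x_{k+1})\to0$ as $k\to\infty$ there is $y\in X$ with $d(f^k(y),x_k)\to0$ as $k\to\infty$. *)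

theory Defs
  imports "HOL-Analysis.Analysis"
begin

definition finv :: "'a set \<Rightarrow> ('a \<Rightarrow> 'a) \<Rightarrow> 'a \<Rightarrow> 'a" where
  "finv X f = inv_into X f"

definition shadowing :: "'a::metric_space set \<Rightarrow> ('a \<Rightarrow> 'a) \<Rightarrow> bool" where
  "shadowing X f \<longleftrightarrow> (\<forall>\<epsilon>>0. \<exists>\<delta>>0. \<forall>x :: int \<Rightarrow> 'a.
     (\<forall>k. x k \<in> X) \<longrightarrow> (\<forall>k. dist (f (x k)) (x (k + 1)) < \<delta>) \<longrightarrow>
     (\<exists>y\<in>X. (\<forall>n::nat. dist ((f ^^ n) y) (x (int n)) < \<epsilon>) \<and>
             (\<forall>n::nat. dist ((finv X f ^^ n) y) (x (- int n)) < \<epsilon>)))"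

definition Ws_eps :: "'a::metric_space set \<Rightarrow> ('a \<Rightarrow> 'a) \<Rightarrow> real \<Rightarrow> 'a \<Rightarrow> 'a set" where
  "Ws_eps X f \<epsilon> x = {y\<in>X. \<forall>n. dist ((f ^^ n) x) ((f ^^ n) y) \<le> \<epsilon>}"

definition Wu_eps :: "'a::metric_space set \<Rightarrow> ('a \<Rightarrow> 'a) \<Rightarrow> real \<Rightarrow> 'a \<Rightarrow> 'a set" where
  "Wu_eps X f \<epsilon> x = {y\<in>X. \<forall>n. dist ((finv X f ^^ n) x) ((finv X f ^^ n) y) \<le> \<epsilon>}"

definition Ws :: "'a::metric_space set \<Rightarrow> ('a \<Rightarrow> 'a) \<Rightarrow> 'a \<Rightarrow> 'a set" where
  "Ws X f x = {y\<in>X. (\<lambda>n. dist ((f ^^ n) x) ((f ^^ n) y)) \<longlonglongrightarrow> 0}"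

definition Wu :: "'a::metric_space set \<Rightarrow> ('a \<Rightarrow> 'a) \<Rightarrow> 'a \<Rightarrow> 'a set" where
  "Wu X f x = {y\<in>X. (\<lambda>n. dist ((finv X f ^^ n) x) ((finv X f ^^ n) y)) \<longlonglongrightarrow> 0}"

definition Vs_eps :: "'a::metric_space set \<Rightarrow> ('a \<Rightarrow> 'a) \<Rightarrow> real \<Rightarrow> 'a \<Rightarrow> 'a set" where
  "Vs_eps X f \<epsilon> x = Ws X f x \<inter> Ws_eps X f \<epsilon> x"

definition Vu_eps :: "'a::metric_space set \<Rightarrow> ('a \<Rightarrow> 'a) \<Rightarrow> real \<Rightarrow> 'a \<Rightarrow> 'a set" where
  "Vu_eps X f \<epsilon> x = Wu X f x \<inter> Wu_eps X f \<epsilon> x"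

definition limit_shadowing :: "'a::metric_space set \<Rightarrow> ('a \<Rightarrow> 'a) \<Rightarrow> bool" where
  "limit_shadowing X f \<longleftrightarrow> (\<forall>x :: nat \<Rightarrow> 'a. (\<forall>k. x k \<in> X) \<longrightarrow>
     (\<lambda>k. dist (f (x k)) (x (Suc k))) \<longlonglongrightarrow> 0 \<longrightarrow>
     (\<exists>y\<in>X. (\<lambda>k. dist ((f ^^ k) y) (x k)) \<longlonglongrightarrow> 0))"

end

theory Submission
  imports Defs
begin

context
  fixes X :: "'a::metric_space set" and f :: "'a \<Rightarrow> 'a"
  assumes surj: "f ` X = X" and inj: "inj_on f X"
begin

lemma fX: "z\<in>X \<Longrightarrow> f z \<in> X" using surj by blast
lemma g_in: "z\<in>X \<Longrightarrow> inv_into X f z \<in> X" using surj by (metis inv_into_into)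
lemma fg: "z\<in>X \<Longrightarrow> f (inv_into X f z) = z" using surj by (metis f_inv_into_f)
lemma gf: "z\<in>X \<Longrightarrow> inv_into X f (f z) = z" using inj by (simp add: inv_into_f_f)
lemma fn_in: "z\<in>X \<Longrightarrow> (f^^n) z \<in> X" by (induction n) (auto simp: fX)
lemma gn_in: "z\<in>X \<Longrightarrow> (inv_into X f^^n) z \<in> X" by (induction n) (auto simp: g_in)
lemma gn_fn: "z\<in>X \<Longrightarrow> (inv_into X f^^n) ((f^^n) z) = z"
proof (induction n)
  case 0 then show ?case by simp
next
  case (Suc n)
  have "(inv_into X f^^Suc n) ((f^^Suc n) z) = (inv_into X f^^n) (inv_into X f (f ((f^^n) z)))"
    by (metis comp_apply funpow.simps(2) funpow_Suc_right)
  also have "\<dots> = z" using Suc gf fn_in by simp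
  finally show ?case .
qed

lemma fk_gK: "w\<in>X \<Longrightarrow> k \<le> K \<Longrightarrow> (f^^k) ((inv_into X f^^K) w) = (inv_into X f^^(K-k)) w"
proof (induction k)
  case 0 show ?case by simp
next
  case (Suc k)
  have e: "K - k = Suc (K - Suc k)" using Suc by arith
  have "(f^^Suc k) ((inv_into X f^^K) w) = f ((inv_into X f^^(K-k)) w)" using Suc by simp
  also have "\<dots> = f (inv_into X f ((inv_into X f^^(K - Suc k)) w))" using e by simp
  also have "\<dots> = (inv_into X f^^(K - Suc k)) w" using fg gn_in Suc by simp
  finally show ?case .
qed

lemma fk_gK_ge: "w\<in>X \<Longrightarrow> K \<le> k \<Longrightarrow> (f^^k) ((inv_into X f^^K) w) = (f^^(k-K)) w"
proof -
  assume w: "w\<in>X" and "K \<le> k"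
  then have "(f^^k) ((inv_into X f^^K) w) = (f^^(k-K)) ((f^^K) ((inv_into X f^^K) w))"
    by (metis funpow_add le_add_diff_inverse2 comp_apply)
  then show ?thesis using fk_gK[OF w, of K K] by simp
qed

lemma gK_fK: "z\<in>X \<Longrightarrow> k \<le> K \<Longrightarrow> (inv_into X f^^(K-k)) ((f^^K) z) = (f^^k) z"
proof -
  assume z: "z\<in>X" and "k\<le>K"
  have "(f^^K) z = (f^^(K-k)) ((f^^k) z)" using \<open>k\<le>K\<close>
    by (metis funpow_add le_add_diff_inverse2 comp_apply)
  then show ?thesis using gn_fn fn_in z by simp
qed

end

lemma cont_iter: "continuous_on X f \<Longrightarrow> f ` X \<subseteq> X \<Longrightarrow> continuous_on X (f^^n)"
proof (induction n)
  case 0 then show ?case by (simp add: continuous_on_id)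
next
  case (Suc n)
  have sub: "(f^^n) ` X \<subseteq> X" proof (induction n) qed (use Suc in auto)
  have "continuous_on X (\<lambda>x. f ((f^^n) x))"
    by (rule continuous_on_compose2[OF Suc.prems(1) Suc.IH[OF Suc.prems] sub])
  then show ?case by simp
qed


lemma shadow_tail:
  fixes X :: "'a::metric_space set" and f :: "'a \<Rightarrow> 'a"
  assumes surj: "f ` X = X" and inj: "inj_on f X"
    and sh: "shadowing X f" and xs: "\<forall>k. x k \<in> X"
    and lim: "(\<lambda>k. dist (f (x k)) (x (Suc k))) \<longlonglongrightarrow> 0" and e: "e > 0"
  shows "\<exists>T. \<exists>p\<in>X. \<forall>n. dist ((f^^n) p) (x (T+n)) < e"
proof -
  let ?g = "inv_into X f"
  obtain \<delta> where "\<delta> > 0" and H: "\<And>x :: int \<Rightarrow> 'a. (\<forall>k. x k \<in> X) \<Longrightarrow> (\<forall>k. dist (f (x k)) (x (k + 1)) < \<delta>) \<Longrightarrow>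
     (\<exists>y\<in>X. (\<forall>n::nat. dist ((f ^^ n) y) (x (int n)) < e))"
    using sh e unfolding shadowing_def by meson
  have "eventually (\<lambda>k. dist (f (x k)) (x (Suc k)) < \<delta>) sequentially"
    using order_tendstoD(2)[OF lim \<open>\<delta>>0\<close>] .
  then obtain T where T: "\<And>k. k \<ge> T \<Longrightarrow> dist (f (x k)) (x (Suc k)) < \<delta>"
    unfolding eventually_sequentially by blast
  define x' where "x' i = (if 0 \<le> i then x (T + nat i) else (?g^^(nat (-i))) (x T))" for i :: int
  have x'X: "\<forall>k. x' k \<in> X" unfolding x'_def using xs gn_in[OF surj inj] by auto
  have "\<forall>k. dist (f (x' k)) (x' (k+1)) < \<delta>"
  proof
    fix k :: int
    consider "0 \<le> k" | "k = -1" | "k < -1" by linarith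
    then show "dist (f (x' k)) (x' (k+1)) < \<delta>"
    proof cases
      case 1
      have "nat (k+1) = Suc (nat k)" using 1 by simp
      then have "x' (k+1) = x (Suc (T + nat k))" using 1 unfolding x'_def by simp
      then show ?thesis using 1 T[of "T + nat k"] unfolding x'_def by simp
    next
      case 2
      then show ?thesis unfolding x'_def using fg[OF surj inj] xs \<open>\<delta>>0\<close> by simp
    next
      case 3
      have e: "nat (-k) = Suc (nat (-(k+1)))" using 3 by simp
      have "f (x' k) = f (?g ((?g^^(nat (-(k+1)))) (x T)))" unfolding x'_def using 3 e
        by simp
      also have "\<dots> = x' (k+1)" unfolding x'_def using 3 fg[OF surj inj] gn_in[OF surj inj] xs by simp
      finally show ?thesis using \<open>\<delta>>0\<close> by simp
    qed
  qed
  then obtain y where "y\<in>X" and y: "\<forall>n::nat. dist ((f ^^ n) y) (x' (int n)) < e"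
    using H[OF x'X] by blast
  have "\<forall>n. dist ((f^^n) y) (x (T+n)) < e" using y unfolding x'_def by simp
  then show ?thesis using \<open>y\<in>X\<close> by blast
qed


theorem mainTheorem8:
  fixes X :: "'a::metric_space set" and f :: "'a \<Rightarrow> 'a"
  assumes "compact X"
    and "f ` X = X" and "inj_on f X" and "continuous_on X f"
    and "continuous_on X (inv_into X f)"
    and "shadowing X f"
    and "\<forall>\<epsilon>>0. \<exists>\<delta>>0. \<forall>x\<in>X. \<forall>y\<in>X. dist x y < \<delta> \<longrightarrow>
           Vs_eps X f \<epsilon> x \<inter> Vu_eps X f \<epsilon> y \<noteq> {}"
  shows "limit_shadowing X f"
  unfolding limit_shadowing_def
proof (intro allI impI)
  note surj = assms(2) and inj = assms(3)
  let ?g = "inv_into X f"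
  fix x :: "nat \<Rightarrow> 'a"
  assume xs: "\<forall>k. x k \<in> X" and lim: "(\<lambda>k. dist (f (x k)) (x (Suc k))) \<longlonglongrightarrow> 0"
  define \<eta> :: "nat \<Rightarrow> real" where "\<eta> j = (1/2)^j" for j
  have \<eta>pos: "\<eta> j > 0" for j unfolding \<eta>_def by simp
  have \<eta>Suc: "\<eta> (Suc j) = \<eta> j / 2" for j unfolding \<eta>_def by simp
  have "\<forall>j. \<exists>\<delta>. \<delta>>0 \<and> (\<forall>a\<in>X. \<forall>b\<in>X. dist a b < \<delta> \<longrightarrow> Vs_eps X f (\<eta> j) a \<inter> Vu_eps X f (\<eta> j) b \<noteq> {})"
    using assms(7) \<eta>pos by blast
  then obtain \<Delta> where \<Delta>: "\<And>j. \<Delta> j > 0" and \<Delta>V: "\<And>j a b. a\<in>X \<Longrightarrow> b\<in>X \<Longrightarrow> dist a b < \<Delta> j \<Longrightarrow> Vs_eps X f (\<eta> j) a \<inter> Vu_eps X f (\<eta> j) b \<noteq> {}"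
    using choice[of "\<lambda>j \<delta>. \<delta>>0 \<and> (\<forall>a\<in>X. \<forall>b\<in>X. dist a b < \<delta> \<longrightarrow> Vs_eps X f (\<eta> j) a \<inter> Vu_eps X f (\<eta> j) b \<noteq> {})"] by blast
  define \<epsilon> where "\<epsilon> j = min (\<eta> j) (min (\<Delta> j) (\<Delta> (Suc j)) / 3)" for j
  have \<epsilon>pos: "\<epsilon> j > 0" for j unfolding \<epsilon>_def using \<eta>pos \<Delta> by simp
  have \<epsilon>\<eta>: "\<epsilon> j \<le> \<eta> j" for j unfolding \<epsilon>_def by simp
  have \<epsilon>1: "3 * \<epsilon> j \<le> \<Delta> j" for j unfolding \<epsilon>_def by simp
  have \<epsilon>2: "3 * \<epsilon> j \<le> \<Delta> (Suc j)" for j unfolding \<epsilon>_def by simp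
  have "\<forall>j. \<exists>T. \<exists>p\<in>X. \<forall>n. dist ((f^^n) p) (x (T+n)) < \<epsilon> j"
    using shadow_tail[OF surj inj assms(6) xs lim] \<epsilon>pos by blast
  then obtain T where "\<forall>j. \<exists>p\<in>X. \<forall>n. dist ((f^^n) p) (x (T j+n)) < \<epsilon> j"
    using choice by metis
  then obtain p where pX: "\<And>j. p j \<in> X" and pT: "\<And>j n. dist ((f^^n) (p j)) (x (T j+n)) < \<epsilon> j"
    using choice[of "\<lambda>j q. q \<in> X \<and> (\<forall>n. dist ((f^^n) q) (x (T j+n)) < \<epsilon> j)"] by metis
  define Inv where "Inv j q K \<longleftrightarrow> q \<in> X \<and> (\<forall>k\<ge>K. dist ((f^^k) q) (x k) \<le> \<eta> j + \<epsilon> j)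
      \<and> (\<exists>N. \<forall>k\<ge>N. dist ((f^^k) q) (x k) < 2 * \<epsilon> j)" for j q K
  have base: "Inv 0 ((?g^^T 0) (p 0)) (T 0)"
  proof -
    have A: "dist ((f^^k) ((?g^^T 0) (p 0))) (x k) < \<epsilon> 0" if "k \<ge> T 0" for k
      using pT[where j=0 and n="k - T 0"] fk_gK_ge[OF surj inj pX[of 0] that] that by simp
    show ?thesis unfolding Inv_def using gn_in[OF surj inj pX[of 0]] A \<epsilon>pos[of 0] \<eta>pos[of 0]
      by (smt (verit))
  qed
  have step: "\<exists>q' K'. Inv (Suc j) q' K' \<and> K < K' \<and> (\<forall>k\<le>K'. dist ((f^^k) q') ((f^^k) q) \<le> \<eta> (Suc j))"
    if I: "Inv j q K" for j q K
  proof -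
    from I obtain N where qX: "q \<in> X" and N: "\<And>k. k \<ge> N \<Longrightarrow> dist ((f^^k) q) (x k) < 2 * \<epsilon> j"
      unfolding Inv_def by blast
    define K' where "K' = max (max (K+1) N) (T (Suc j))"
    define a where "a = (f^^K') q"
    define b where "b = (f^^(K' - T (Suc j))) (p (Suc j))"
    have aX: "a \<in> X" unfolding a_def using fn_in[OF surj inj qX] .
    have bX: "b \<in> X" unfolding b_def using fn_in[OF surj inj pX[of "Suc j"]] .
    have da: "dist a (x K') < 2 * \<epsilon> j" unfolding a_def using N K'_def by simp
    have db: "dist b (x K') < \<epsilon> (Suc j)" unfolding b_def using pT[where j="Suc j" and n="K' - T (Suc j)"] K'_def by simp
    have "dist b a < \<Delta> (Suc j)"
      using da db dist_triangle3[of b a "x K'"] \<epsilon>1[of "Suc j"] \<epsilon>2[of j] dist_commute[of "x K'" b] dist_commute[of "x K'" a] by linarith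
    then obtain w where "w \<in> Vs_eps X f (\<eta> (Suc j)) b \<inter> Vu_eps X f (\<eta> (Suc j)) a"
      using \<Delta>V[OF bX aX] by blast
    then have wX: "w \<in> X" and wlim: "(\<lambda>n. dist ((f^^n) b) ((f^^n) w)) \<longlonglongrightarrow> 0"
      and ws: "\<And>n. dist ((f^^n) b) ((f^^n) w) \<le> \<eta> (Suc j)"
      and wu: "\<And>n. dist ((?g^^n) a) ((?g^^n) w) \<le> \<eta> (Suc j)"
      unfolding Vs_eps_def Vu_eps_def Ws_def Ws_eps_def Wu_def Wu_eps_def finv_def by auto
    define q' where "q' = (?g^^K') w"
    have q'X: "q' \<in> X" unfolding q'_def using gn_in[OF surj inj wX] .
    have fb: "(f^^m) b = (f^^(m + K' - T (Suc j))) (p (Suc j))" for m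
    proof -
      have "m + K' - T (Suc j) = m + (K' - T (Suc j))" using K'_def by simp
      then show ?thesis unfolding b_def by (simp add: funpow_add)
    qed
    have fbx: "dist ((f^^(k-K')) b) (x k) < \<epsilon> (Suc j)" if "k \<ge> K'" for k
      using pT[where j="Suc j" and n="k - T (Suc j)"] fb[of "k-K'"] that K'_def by simp
    have fq': "(f^^k) q' = (f^^(k-K')) w" if "k \<ge> K'" for k
      unfolding q'_def using fk_gK_ge[OF surj inj wX that] .
    have I1: "dist ((f^^k) q') (x k) \<le> \<eta> (Suc j) + \<epsilon> (Suc j)" if "k \<ge> K'" for k
      unfolding fq'[OF that] using fbx[OF that] ws[of "k-K'"] dist_triangle3[of "(f^^(k-K')) w" "x k" "(f^^(k-K')) b"]
      dist_commute[of "(f^^(k-K')) b" "(f^^(k-K')) w"] by linarith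
    obtain M where M: "\<And>n. n \<ge> M \<Longrightarrow> dist ((f^^n) b) ((f^^n) w) < \<epsilon> (Suc j)"
      using order_tendstoD(2)[OF wlim \<epsilon>pos[of "Suc j"]] unfolding eventually_sequentially by blast
    have I2: "dist ((f^^k) q') (x k) < 2 * \<epsilon> (Suc j)" if "k \<ge> K' + M" for k
    proof -
      have "k \<ge> K'" "M \<le> k - K'" using that by auto
      then show ?thesis
        unfolding fq'[OF \<open>k \<ge> K'\<close>] using fbx[of k] M[of "k-K'"] dist_triangle3[of "(f^^(k-K')) w" "x k" "(f^^(k-K')) b"]
          dist_commute[of "(f^^(k-K')) b" "(f^^(k-K')) w"] by linarith
    qed
    have I3: "dist ((f^^k) q') ((f^^k) q) \<le> \<eta> (Suc j)" if "k \<le> K'" for k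
    proof -
      have "(f^^k) q' = (?g^^(K'-k)) w" unfolding q'_def using fk_gK[OF surj inj wX that] .
      moreover have "(f^^k) q = (?g^^(K'-k)) a" unfolding a_def using gK_fK[OF surj inj qX that] by simp
      ultimately show ?thesis using wu[of "K'-k"] by (simp add: dist_commute)
    qed
    have "Inv (Suc j) q' K'" unfolding Inv_def using q'X I1 I2 by blast
    moreover have "K < K'" unfolding K'_def by simp
    ultimately show ?thesis using I3 by blast
  qed
  define S where "S = rec_nat ((?g^^T 0) (p 0), T 0)
     (\<lambda>j s. SOME s'. Inv (Suc j) (fst s') (snd s') \<and> snd s < snd s' \<and> (\<forall>k\<le>snd s'. dist ((f^^k) (fst s')) ((f^^k) (fst s)) \<le> \<eta> (Suc j)))"
  have S0: "S 0 = ((?g^^T 0) (p 0), T 0)" unfolding S_def by simp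
  have SSuc: "S (Suc j) = (SOME s'. Inv (Suc j) (fst s') (snd s') \<and> snd (S j) < snd s' \<and> (\<forall>k\<le>snd s'. dist ((f^^k) (fst s')) ((f^^k) (fst (S j))) \<le> \<eta> (Suc j)))" for j
    unfolding S_def by simp
  have SI: "Inv j (fst (S j)) (snd (S j)) \<and> (Inv j (fst (S j)) (snd (S j)) \<longrightarrow>
     Inv (Suc j) (fst (S (Suc j))) (snd (S (Suc j))) \<and> snd (S j) < snd (S (Suc j)) \<and>
     (\<forall>k\<le>snd (S (Suc j)). dist ((f^^k) (fst (S (Suc j)))) ((f^^k) (fst (S j))) \<le> \<eta> (Suc j)))" for j
  proof (induction j)
    case 0
    have "Inv 0 (fst (S 0)) (snd (S 0))" using base S0 by simp
    moreover
    { assume "Inv 0 (fst (S 0)) (snd (S 0))"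
      from step[OF this] obtain q' K' where "Inv (Suc 0) q' K' \<and> snd (S 0) < K' \<and> (\<forall>k\<le>K'. dist ((f^^k) q') ((f^^k) (fst (S 0))) \<le> \<eta> (Suc 0))"
        by blast
      then have "\<exists>s'. Inv (Suc 0) (fst s') (snd s') \<and> snd (S 0) < snd s' \<and> (\<forall>k\<le>snd s'. dist ((f^^k) (fst s')) ((f^^k) (fst (S 0))) \<le> \<eta> (Suc 0))"
        by (intro exI[of _ "(q', K')"]) simp
      from someI_ex[OF this] have "Inv (Suc 0) (fst (S (Suc 0))) (snd (S (Suc 0))) \<and> snd (S 0) < snd (S (Suc 0)) \<and>
       (\<forall>k\<le>snd (S (Suc 0)). dist ((f^^k) (fst (S (Suc 0)))) ((f^^k) (fst (S 0))) \<le> \<eta> (Suc 0))"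
        unfolding SSuc[of 0] . }
    ultimately show ?case by blast
  next
    case (Suc j)
    have "Inv (Suc j) (fst (S (Suc j))) (snd (S (Suc j)))" using Suc by blast
    moreover
    { assume "Inv (Suc j) (fst (S (Suc j))) (snd (S (Suc j)))"
      from step[OF this] obtain q' K' where "Inv (Suc (Suc j)) q' K' \<and> snd (S (Suc j)) < K' \<and> (\<forall>k\<le>K'. dist ((f^^k) q') ((f^^k) (fst (S (Suc j)))) \<le> \<eta> (Suc (Suc j)))"
        by blast
      then have "\<exists>s'. Inv (Suc (Suc j)) (fst s') (snd s') \<and> snd (S (Suc j)) < snd s' \<and> (\<forall>k\<le>snd s'. dist ((f^^k) (fst s')) ((f^^k) (fst (S (Suc j)))) \<le> \<eta> (Suc (Suc j)))"
        by (intro exI[of _ "(q', K')"]) simp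
      from someI_ex[OF this] have "Inv (Suc (Suc j)) (fst (S (Suc (Suc j)))) (snd (S (Suc (Suc j)))) \<and> snd (S (Suc j)) < snd (S (Suc (Suc j))) \<and>
       (\<forall>k\<le>snd (S (Suc (Suc j))). dist ((f^^k) (fst (S (Suc (Suc j))))) ((f^^k) (fst (S (Suc j)))) \<le> \<eta> (Suc (Suc j)))"
        unfolding SSuc[of "Suc j"] . }
    ultimately show ?case by blast
  qed
  define q where "q j = fst (S j)" for j
  define K where "K j = snd (S j)" for j
  have qI: "Inv j (q j) (K j)" for j using SI unfolding q_def K_def by blast
  have qX: "q j \<in> X" for j using qI unfolding Inv_def by blast
  have q1: "dist ((f^^k) (q j)) (x k) \<le> \<eta> j + \<epsilon> j" if "k \<ge> K j" for j k
    using qI[of j] that unfolding Inv_def by blast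
  have Kinc: "K j < K (Suc j)" for j using SI[of j] unfolding K_def by blast
  have qstep: "dist ((f^^k) (q (Suc j))) ((f^^k) (q j)) \<le> \<eta> (Suc j)" if "k \<le> K (Suc j)" for j k
    using SI[of j] that unfolding K_def q_def by blast
  have Kmono: "strict_mono K" using Kinc by (simp add: strict_mono_Suc_iff)
  have chain: "dist ((f^^k) (q (j+m))) ((f^^k) (q j)) \<le> \<eta> j - \<eta> (j+m)" if "k \<le> K (Suc j)" for j k m
  proof (induction m)
    case 0 then show ?case by simp
  next
    case (Suc m)
    have "K (Suc j) \<le> K (Suc (j+m))" using Kmono by (simp add: strict_mono_less_eq)
    then have "dist ((f^^k) (q (Suc (j+m)))) ((f^^k) (q (j+m))) \<le> \<eta> (Suc (j+m))"
      using qstep that by simp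
    then show ?case using Suc dist_triangle[of "(f^^k) (q (j + Suc m))" "(f^^k) (q j)" "(f^^k) (q (j+m))"]
      \<eta>Suc[of "j+m"] by simp
  qed
  obtain y r where yX: "y \<in> X" and r: "strict_mono (r :: nat \<Rightarrow> nat)" and qr: "(q \<circ> r) \<longlonglongrightarrow> y"
    using seq_compactE[OF compact_imp_seq_compact[OF assms(1)]] qX by metis
  have cont: "continuous_on X (f^^k)" for k
    using cont_iter[OF assms(4)] surj by simp
  have ybound: "dist ((f^^k) y) ((f^^k) (q j)) \<le> \<eta> j" if "k \<le> K (Suc j)" for k j
  proof -
    have "(\<lambda>m. (f^^k) ((q \<circ> r) m)) \<longlonglongrightarrow> (f^^k) y"
      by (rule continuous_on_tendsto_compose[OF cont qr yX]) (simp add: qX)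
    then have L: "(\<lambda>m. dist ((f^^k) ((q \<circ> r) m)) ((f^^k) (q j))) \<longlonglongrightarrow> dist ((f^^k) y) ((f^^k) (q j))"
      by (intro tendsto_intros)
    show ?thesis
    proof (rule LIMSEQ_le_const2[OF L], intro exI allI impI)
      fix m assume "m \<ge> j"
      then have "r m \<ge> j" using seq_suble[OF r, of m] by simp
      then obtain d where "r m = j + d" using le_Suc_ex by blast
      then show "dist ((f^^k) ((q \<circ> r) m)) ((f^^k) (q j)) \<le> \<eta> j"
        using chain[OF that, of d] \<eta>pos[of "j+d"] by simp
    qed
  qed
  have \<eta>anti: "\<eta> i \<le> \<eta> j" if "j \<le> i" for i j
    unfolding \<eta>_def using that by (simp add: power_decreasing)
  have final: "dist ((f^^n) y) (x n) \<le> 3 * \<eta> j" if "n \<ge> K j" for n j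
  proof -
    define A where "A = {i. K i \<le> n}"
    have Asub: "A \<subseteq> {..n}" unfolding A_def using seq_suble[OF Kmono] order_trans by auto
    then have fin: "finite A" by (rule finite_subset) simp
    have jA: "j \<in> A" unfolding A_def using that by simp
    define i where "i = Max A"
    have iA: "i \<in> A" unfolding i_def using fin jA Max_in by blast
    have ji: "j \<le> i" unfolding i_def using fin jA by simp
    have "Suc i \<notin> A" using Max_ge[OF fin, of "Suc i"] i_def by fastforce
    then have nK: "n \<le> K (Suc i)" unfolding A_def by simp
    have "dist ((f^^n) y) (x n) \<le> dist ((f^^n) y) ((f^^n) (q i)) + dist ((f^^n) (q i)) (x n)"
      by (rule dist_triangle)
    also have "\<dots> \<le> \<eta> i + (\<eta> i + \<epsilon> i)"
      using ybound[OF nK] q1[of i n] iA unfolding A_def by (intro add_mono) auto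
    also have "\<dots> \<le> 3 * \<eta> j" using \<epsilon>\<eta>[of i] \<eta>anti[OF ji] by simp
    finally show ?thesis .
  qed
  show "\<exists>y\<in>X. (\<lambda>k. dist ((f ^^ k) y) (x k)) \<longlonglongrightarrow> 0"
  proof (intro bexI[OF _ yX] LIMSEQ_I)
    fix e :: real assume "e > 0"
    then obtain j where "(1/2::real)^j < e/3" using real_arch_pow_inv[of "e/3" "1/2::real"] by auto
    then have "3 * \<eta> j < e" unfolding \<eta>_def by simp
    then show "\<exists>no. \<forall>n\<ge>no. norm (dist ((f ^^ n) y) (x n) - 0) < e"
      using final[of j] by (intro exI[of _ "K j"]) force
  qed
qed

end
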